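(* Let $\boldsymbol{\Sigma}$ be symmetric positive definite on $\mathbb{R}^d$ with extreme eigenvalues $\lambda_{\max},\lambda_{\min}$, let $f(\mathbf{x})=\mathrm{pos}(\mathbf{r}_*^{\mathsf T}\mathbf{x})$ with $\|\mathbf{r}_*\|_2=1$, $q\ge2$ and $k\in\{1,\dots,q-1\}$ with $k\neq q/2$. Let $\varepsilon,\delta\in(0,1)$ and let $\hat{\mathbf{r}}$ be a unit vector with $\min\{\|\hat{\mathbf{r}}-\mathbf{r}_*\|_2,\|\hat{\mathbf{r}}+\mathbf{r}_*\|_2\}\le\varepsilon$. Let $h(\mathbf{x})=\mathrm{pos}(\hat{\mathbf{r}}^{\mathsf T}\mathbf{x})$, $\tilde h(\mathbf{x})=\mathrm{pos}(-\hat{\mathbf{r}}^{\mathsf T}\mathbf{x})$, let $\mathcal{M}$ be a collection of $s$ bags sampled i.i.d. from $\mathrm{Ex}(f,N(\mathbf{0},\boldsymbol{\Sigma}),q,k)$ (independently of $\hat{\mathbf{r}}$), and let $h^*\in\{h,\tilde h\}$ be the one with lower $\mathrm{BagErr}_{\mathrm{sample}}(\cdot,\mathcal{M})$. Then there are absolute constants $C,c_0>0$ such that if $s\ge Cd(\log q+\log(1/\delta))/\varepsilon^2$, with probability at least $1-\delta/2$, $\Pr_{\mathbf{x}\sim N(\mathbf{0},\boldsymbol{\Sigma})}[h^*(\mathbf{x})\neq f(\mathbf{x})]\le16c_0q\varepsilon\sqrt{\lambda_{\max}/\lambda_{\min}}$.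
   Context: $\mathrm{pos}(a)=1$ if $a>0$, else $0$. The bag oracle $\mathrm{Ex}(f,\mathcal{D},q,k)$ returns a bag $B$ of $q$ independent points, $k$ drawn from $\mathcal{D}$ conditioned on $f=1$ and $q-k$ from $\mathcal{D}$ conditioned on $f=0$. $\mathrm{BagErr}_{\mathrm{sample}}(h,\mathcal{M}):=|\{B\in\mathcal{M}:\mathrm{Avg}\{h(\mathbf{x}):\mathbf{x}\in B\}\neq k/q\}|/|\mathcal{M}|$. *)

theory Defs
  imports "HOL-Probability.Probability"
begin

text \<open>Vectors in R^d are functions nat => real, only components i < d matter.
  Matrices are nat => nat => real, only entries i, j < d matter.\<close>

definition pos :: "real \<Rightarrow> real" where
  "pos a = (if a > 0 then 1 else 0)"

definition dotp :: "nat \<Rightarrow> (nat \<Rightarrow> real) \<Rightarrow> (nat \<Rightarrow> real) \<Rightarrow> real" where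
  "dotp d a x = (\<Sum>i<d. a i * x i)"

definition vnorm :: "nat \<Rightarrow> (nat \<Rightarrow> real) \<Rightarrow> real" where
  "vnorm d v = sqrt (\<Sum>i<d. (v i)^2)"

definition quadf :: "nat \<Rightarrow> (nat \<Rightarrow> nat \<Rightarrow> real) \<Rightarrow> (nat \<Rightarrow> real) \<Rightarrow> real" where
  "quadf d S a = (\<Sum>i<d. \<Sum>j<d. a i * S i j * a j)"

definition sym_mat :: "nat \<Rightarrow> (nat \<Rightarrow> nat \<Rightarrow> real) \<Rightarrow> bool" where
  "sym_mat d S \<longleftrightarrow> (\<forall>i<d. \<forall>j<d. S i j = S j i)"

definition posdef :: "nat \<Rightarrow> (nat \<Rightarrow> nat \<Rightarrow> real) \<Rightarrow> bool" where
  "posdef d S \<longleftrightarrow> (\<forall>x. (\<exists>i<d. x i \<noteq> 0) \<longrightarrow> quadf d S x > 0)"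

definition is_eigenvalue :: "nat \<Rightarrow> (nat \<Rightarrow> nat \<Rightarrow> real) \<Rightarrow> real \<Rightarrow> bool" where
  "is_eigenvalue d S lam \<longleftrightarrow>
     (\<exists>v. (\<exists>i<d. v i \<noteq> 0) \<and> (\<forall>i<d. (\<Sum>j<d. S i j * v j) = lam * v i))"

text \<open>mu is the multivariate Gaussian N(0,S) on R^d (as a measure on PiM {..<d} borel):
  every linear functional a^T x is distributed as N(0, a^T S a).\<close>
definition gaussian :: "nat \<Rightarrow> (nat \<Rightarrow> nat \<Rightarrow> real) \<Rightarrow> (nat \<Rightarrow> real) measure \<Rightarrow> bool" where
  "gaussian d S mu \<longleftrightarrow> prob_space mu \<and>
     sets mu = sets (PiM {..<d} (\<lambda>_. borel :: real measure)) \<and>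
     (\<forall>a. quadf d S a > 0 \<longrightarrow>
        distr mu borel (dotp d a) = density lborel (normal_density 0 (sqrt (quadf d S a))))"

definition bag_oracle :: "('b \<Rightarrow> real) \<Rightarrow> 'b measure \<Rightarrow> nat \<Rightarrow> nat \<Rightarrow> (nat \<Rightarrow> 'b) measure" where
  "bag_oracle f D q k = PiM {..<q} (\<lambda>j. if j < k then uniform_measure D {x \<in> space D. f x = 1}
                                               else uniform_measure D {x \<in> space D. f x = 0})"

definition bag_err_sample :: "('b \<Rightarrow> real) \<Rightarrow> nat \<Rightarrow> nat \<Rightarrow> nat \<Rightarrow> (nat \<Rightarrow> nat \<Rightarrow> 'b) \<Rightarrow> real" where
  "bag_err_sample h q k s M =
     real (card {i \<in> {..<s}. (\<Sum>j<q. h (M i j)) / real q \<noteq> real k / real q}) / real s"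

end

theory Submission
  imports Defs
begin

definition sumsq :: "nat \<Rightarrow> (nat \<Rightarrow> real) \<Rightarrow> real" where
  "sumsq d v = (\<Sum>i<d. (v i)^2)"

lemma sumsq_nonneg: "0 \<le> sumsq d v"
  unfolding sumsq_def by (simp add: sum_nonneg)

lemma vnorm_sq: "(vnorm d v)^2 = sumsq d v"
  unfolding vnorm_def sumsq_def by (simp add: sum_nonneg)

lemma dotp_add: "dotp d (\<lambda>i. a i + b i) x = dotp d a x + dotp d b x"
  unfolding dotp_def by (simp add: distrib_right sum.distrib)

lemma dotp_minus: "dotp d (\<lambda>i. - a i) x = - dotp d a x"
  unfolding dotp_def by (simp add: sum_negf)

lemma dotp_diff: "dotp d (\<lambda>i. a i - b i) x = dotp d a x - dotp d b x"
  unfolding dotp_def by (simp add: left_diff_distrib sum_subtractf)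

lemma quadf_neg_mat: "quadf d (\<lambda>i j. - S i j) w = - quadf d S w"
  unfolding quadf_def by (simp add: sum_negf)

lemma quadf_uminus: "quadf d S (\<lambda>i. - w i) = quadf d S w"
  unfolding quadf_def by simp

lemma quadf_scale: "quadf d S (\<lambda>i. c * w i) = c^2 * quadf d S w"
  unfolding quadf_def by (simp add: sum_distrib_left power2_eq_square algebra_simps)

lemma sumsq_scale: "sumsq d (\<lambda>i. c * w i) = c^2 * sumsq d w"
  unfolding sumsq_def by (simp add: sum_distrib_left power_mult_distrib)

lemma quadf_cong: "(\<And>i. i < d \<Longrightarrow> v i = w i) \<Longrightarrow> quadf d S v = quadf d S w"
  unfolding quadf_def by (intro sum.cong refl) auto

lemma sumsq_cong: "(\<And>i. i < d \<Longrightarrow> v i = w i) \<Longrightarrow> sumsq d v = sumsq d w"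
  unfolding sumsq_def by (intro sum.cong refl) auto

lemma sumsq_zero_iff: "sumsq d v = 0 \<longleftrightarrow> (\<forall>i<d. v i = 0)"
  unfolding sumsq_def by (subst sum_nonneg_eq_0_iff) auto

lemma quadf_expand:
  assumes "sym_mat d S"
  shows "quadf d S (\<lambda>i. v i + t * w i) =
    quadf d S v + 2 * t * (\<Sum>i<d. w i * (\<Sum>j<d. S i j * v j)) + t^2 * quadf d S w"
proof -
  have swap: "(\<Sum>i<d. \<Sum>j<d. v i * S i j * w j) = (\<Sum>i<d. w i * (\<Sum>j<d. S i j * v j))"
  proof -
    have "(\<Sum>i<d. \<Sum>j<d. v i * S i j * w j) = (\<Sum>j<d. \<Sum>i<d. v i * S i j * w j)"
      by (rule sum.swap)
    also have "\<dots> = (\<Sum>j<d. w j * (\<Sum>i<d. S j i * v i))"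
      using assms unfolding sym_mat_def
      by (intro sum.cong refl) (auto simp: sum_distrib_left mult_ac)
    finally show ?thesis .
  qed
  have "quadf d S (\<lambda>i. v i + t * w i) =
    (\<Sum>i<d. \<Sum>j<d. v i * S i j * v j) + t * (\<Sum>i<d. \<Sum>j<d. v i * S i j * w j)
      + t * (\<Sum>i<d. \<Sum>j<d. w i * S i j * v j) + t^2 * (\<Sum>i<d. \<Sum>j<d. w i * S i j * w j)"
    unfolding quadf_def
    by (simp add: sum.distrib sum_distrib_left algebra_simps power2_eq_square)
  also have "(\<Sum>i<d. \<Sum>j<d. w i * S i j * v j) = (\<Sum>i<d. w i * (\<Sum>j<d. S i j * v j))"
    by (simp add: sum_distrib_left mult_ac)
  finally show ?thesis using swap unfolding quadf_def by simp
qed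

lemma sumsq_expand:
  "sumsq d (\<lambda>i. v i + t * w i) = sumsq d v + 2 * t * (\<Sum>i<d. v i * w i) + t^2 * sumsq d w"
  unfolding sumsq_def
  by (simp add: sum.distrib sum_distrib_left algebra_simps power2_eq_square)

lemma quadf_parallelogram:
  "quadf d S (\<lambda>i. a i + b i) + quadf d S (\<lambda>i. a i - b i) = 2 * quadf d S a + 2 * quadf d S b"
  unfolding quadf_def
  by (simp add: sum.distrib[symmetric] sum_distrib_left algebra_simps)


lemma compact_sphere_set:
  "compact {v::nat\<Rightarrow>real. v \<in> PiE UNIV (\<lambda>i. if i < d then {-1..1} else {0}) \<and> sumsq d v = 1}"
proof -
  have c1: "compact (PiE UNIV (\<lambda>i::nat. if i < d then {-1..1::real} else {0}))"
  proof -
    have "compactin (product_topology (\<lambda>i. euclidean) UNIV)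
            (PiE UNIV (\<lambda>i::nat. if i < d then {-1..1::real} else {0}))"
      by (subst compactin_PiE) auto
    then show ?thesis by (simp add: euclidean_product_topology compactin_euclidean_iff)
  qed
  have cont: "continuous_on UNIV (\<lambda>v::nat\<Rightarrow>real. sumsq d v)"
    unfolding sumsq_def
    by (intro continuous_intros continuous_on_product_then_coordinatewise continuous_on_id)
  have c2: "closed {v::nat\<Rightarrow>real. sumsq d v = 1}"
    using closed_Collect_eq[OF cont continuous_on_const] by simp
  have "{v::nat\<Rightarrow>real. v \<in> PiE UNIV (\<lambda>i. if i < d then {-1..1} else {0}) \<and> sumsq d v = 1}
     = PiE UNIV (\<lambda>i. if i < d then {-1..1} else {0}) \<inter> {v. sumsq d v = 1}" by auto
  then show ?thesis using compact_Int_closed[OF c1 c2] by simp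
qed

lemma min_rayleigh:
  assumes "0 < d"
  shows "\<exists>v. sumsq d v = 1 \<and> (\<forall>w. quadf d S v * sumsq d w \<le> quadf d S w)"
proof -
  define K where "K = {v::nat\<Rightarrow>real. v \<in> PiE UNIV (\<lambda>i. if i < d then {-1..1} else {0}) \<and> sumsq d v = 1}"
  have "compact K" unfolding K_def by (rule compact_sphere_set)
  moreover have "(\<lambda>i. if i = 0 then 1 else 0) \<in> K"
    using assms unfolding K_def sumsq_def
    by (auto simp: PiE_iff if_distrib[of "\<lambda>x. x^2"] sum.delta' cong: if_cong)
  hence "K \<noteq> {}" by auto
  moreover have "continuous_on K (quadf d S)"
    unfolding quadf_def
    by (intro continuous_intros continuous_on_product_then_coordinatewise continuous_on_id)
  ultimately obtain v where vK: "v \<in> K" and vmin: "\<And>y. y \<in> K \<Longrightarrow> quadf d S v \<le> quadf d S y"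
    using continuous_attains_inf by metis
  have "quadf d S v * sumsq d w \<le> quadf d S w" for w
  proof (cases "sumsq d w = 0")
    case True
    then have "\<forall>i<d. w i = 0" by (simp add: sumsq_zero_iff)
    then have "quadf d S w = 0" unfolding quadf_def by simp
    then show ?thesis using True by simp
  next
    case False
    then have pos: "sumsq d w > 0" using sumsq_nonneg[of d w] by linarith
    define c where "c = 1 / sqrt (sumsq d w)"
    define u where "u = (\<lambda>i. if i < d then c * w i else 0)"
    have su: "sumsq d u = c^2 * sumsq d w"
      by (subst sumsq_scale[symmetric]) (rule sumsq_cong, simp add: u_def)
    have c2: "c^2 * sumsq d w = 1" using pos unfolding c_def by (simp add: power_divide)
    have qu: "quadf d S u = c^2 * quadf d S w"
      by (subst quadf_scale[symmetric]) (rule quadf_cong, simp add: u_def)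
    have ub: "u i \<in> {-1..1}" if "i < d" for i
    proof -
      have "(u i)^2 \<le> sumsq d u"
        unfolding sumsq_def using that
        by (intro member_le_sum) auto
      then have "(u i)^2 \<le> 1^2" using su c2 by simp
      then show ?thesis using abs_le_square_iff[of "u i" 1] by auto
    qed
    have uK: "u \<in> K" unfolding K_def using su c2 ub by (auto simp: PiE_iff u_def)
    have "quadf d S v \<le> c^2 * quadf d S w" using vmin[OF uK] qu by simp
    then have "quadf d S v * sumsq d w \<le> c^2 * quadf d S w * sumsq d w"
      using pos by (simp add: mult_right_mono)
    also have "\<dots> = quadf d S w" using c2 by (simp add: mult_ac)
    finally show ?thesis .
  qed
  then show ?thesis using vK unfolding K_def by auto
qed

lemma rayleigh_eigen:
  assumes sym: "sym_mat d S" and v1: "sumsq d v = 1"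
    and vmin: "\<forall>w. quadf d S v * sumsq d w \<le> quadf d S w"
  shows "is_eigenvalue d S (quadf d S v)"
proof -
  define m where "m = quadf d S v"
  define r where "r = (\<lambda>i. (\<Sum>j<d. S i j * v j) - m * v i)"
  define R where "R = sumsq d r"
  define K where "K = quadf d S r - m * sumsq d r"
  have key: "0 \<le> 2 * t * R + t^2 * K" for t
  proof -
    have "m * sumsq d (\<lambda>i. v i + t * r i) \<le> quadf d S (\<lambda>i. v i + t * r i)"
      using vmin m_def by auto
    then have "m * (1 + 2 * t * (\<Sum>i<d. v i * r i) + t^2 * sumsq d r)
       \<le> m + 2 * t * (\<Sum>i<d. r i * (\<Sum>j<d. S i j * v j)) + t^2 * quadf d S r"
      using quadf_expand[OF sym, of v t r] sumsq_expand[of d v t r] v1 m_def by simp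
    moreover have "(\<Sum>i<d. r i * (\<Sum>j<d. S i j * v j)) - m * (\<Sum>i<d. v i * r i) = R"
      unfolding R_def sumsq_def r_def
      by (simp add: sum_distrib_left sum_subtractf[symmetric] power2_eq_square algebra_simps)
    ultimately show ?thesis unfolding K_def by (simp add: algebra_simps)
  qed
  have R0: "R = 0"
  proof (rule ccontr)
    assume "R \<noteq> 0"
    then have Rp: "R > 0" using sumsq_nonneg[of d r] R_def by linarith
    obtain A where A: "A = \<bar>K\<bar> + 1" by simp
    have Ap: "A > 0" "K \<le> A" using A by auto
    define t where "t = - R / A"
    have a: "t^2 * K \<le> t^2 * A" using Ap by (intro mult_left_mono) auto
    have "t^2 * A = R * R / A"
      unfolding t_def using Ap by (simp add: power2_eq_square field_simps)
    moreover have "2 * t * R = - 2 * (R * R / A)"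
      unfolding t_def using Ap by (simp add: field_simps)
    moreover have "R * R / A > 0" using Rp Ap by simp
    ultimately have "2 * t * R + t^2 * K < 0" using a by linarith
    then show False using key[of t] by linarith
  qed
  then have r0: "\<forall>i<d. r i = 0" unfolding R_def by (simp add: sumsq_zero_iff)
  have "\<exists>i<d. v i \<noteq> 0"
  proof (rule ccontr)
    assume "\<not> (\<exists>i<d. v i \<noteq> 0)"
    then have "sumsq d v = 0" by (simp add: sumsq_zero_iff)
    then show False using v1 by simp
  qed
  then show ?thesis unfolding is_eigenvalue_def m_def[symmetric]
    using r0 unfolding r_def by auto
qed

lemma quadf_bounds:
  assumes sym: "sym_mat d S" and d0: "0 < d"
    and emax: "\<forall>l. is_eigenvalue d S l \<longrightarrow> l \<le> lmax"
    and emin: "\<forall>l. is_eigenvalue d S l \<longrightarrow> lmin \<le> l"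
  shows "lmin * sumsq d w \<le> quadf d S w" and "quadf d S w \<le> lmax * sumsq d w"
proof -
  obtain v where v: "sumsq d v = 1" "\<forall>w. quadf d S v * sumsq d w \<le> quadf d S w"
    using min_rayleigh[OF d0] by blast
  have "lmin \<le> quadf d S v" using emin rayleigh_eigen[OF sym v] by blast
  then have "lmin * sumsq d w \<le> quadf d S v * sumsq d w"
    by (intro mult_right_mono sumsq_nonneg)
  then show "lmin * sumsq d w \<le> quadf d S w" using v(2) by (meson order_trans)
next
  let ?T = "\<lambda>i j. - S i j"
  have symT: "sym_mat d ?T" using sym unfolding sym_mat_def by auto
  obtain v where v: "sumsq d v = 1" "\<forall>w. quadf d ?T v * sumsq d w \<le> quadf d ?T w"
    using min_rayleigh[OF d0] by blast
  have ev: "is_eigenvalue d ?T (quadf d ?T v)" by (rule rayleigh_eigen[OF symT v])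
  have "is_eigenvalue d S (quadf d S v)"
  proof -
    from ev obtain u where "\<exists>i<d. u i \<noteq> 0"
        "\<forall>i<d. (\<Sum>j<d. - S i j * u j) = - quadf d S v * u i"
      unfolding is_eigenvalue_def quadf_neg_mat by auto
    then show ?thesis unfolding is_eigenvalue_def
      by (intro exI[of _ u]) (auto simp: sum_negf)
  qed
  then have "quadf d S v \<le> lmax" using emax by blast
  then have "quadf d S v * sumsq d w \<le> lmax * sumsq d w"
    by (intro mult_right_mono sumsq_nonneg)
  moreover have "- quadf d S v * sumsq d w \<le> - quadf d S w"
    using v(2) quadf_neg_mat by metis
  ultimately show "quadf d S w \<le> lmax * sumsq d w" by linarith
qed


lemma dotp_meas_PiM: "dotp d c \<in> borel_measurable (PiM {..<d} (\<lambda>_. borel :: real measure))"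
  unfolding dotp_def by measurable

lemma dotp_meas:
  assumes "gaussian d S mu" shows "dotp d c \<in> borel_measurable mu"
  using assms dotp_meas_PiM unfolding gaussian_def
  by (metis measurable_cong_sets)

lemma gaussian_prob: "gaussian d S mu \<Longrightarrow> prob_space mu"
  unfolding gaussian_def by simp

lemma normal_density_le:
  assumes "0 < \<sigma>" shows "normal_density 0 \<sigma> x \<le> 1 / (2 * \<sigma>)"
proof -
  have "2 * \<sigma> \<le> sqrt (2 * pi * \<sigma>\<^sup>2)"
  proof -
    have "(2 * \<sigma>)^2 \<le> 2 * pi * \<sigma>\<^sup>2" using pi_gt3 assms
      by (simp add: power_mult_distrib mult_right_mono)
    then show ?thesis using assms by (metis real_le_rsqrt)
  qed
  moreover have "exp (-(x - 0)\<^sup>2/ (2 * \<sigma>\<^sup>2)) \<le> 1" using assms by simp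
  ultimately have "1 / sqrt (2 * pi * \<sigma>\<^sup>2) * exp (-(x - 0)\<^sup>2/ (2 * \<sigma>\<^sup>2)) \<le> 1 / (2 * \<sigma>) * 1"
    using assms by (intro mult_mono) (auto simp: frac_le)
  then show ?thesis unfolding normal_density_def by simp
qed

lemma gauss_small:
  assumes g: "gaussian d S mu" and qc: "quadf d S c > 0" and tp: "0 < \<tau>"
  shows "measure mu {x \<in> space mu. \<bar>dotp d c x\<bar> < \<tau>} \<le> \<tau> / sqrt (quadf d S c)"
proof -
  define \<sigma> where "\<sigma> = sqrt (quadf d S c)"
  have sp: "\<sigma> > 0" using qc unfolding \<sigma>_def by simp
  have meas: "dotp d c \<in> measurable mu borel" using dotp_meas[OF g] .
  have D: "distr mu borel (dotp d c) = density lborel (normal_density 0 \<sigma>)"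
    using g qc unfolding gaussian_def \<sigma>_def by blast
  have set_eq: "{x \<in> space mu. \<bar>dotp d c x\<bar> < \<tau>} = dotp d c -` {-\<tau><..<\<tau>} \<inter> space mu"
    by auto
  have "measure mu {x \<in> space mu. \<bar>dotp d c x\<bar> < \<tau>} = measure (density lborel (normal_density 0 \<sigma>)) {-\<tau><..<\<tau>}"
    unfolding set_eq D[symmetric] by (rule measure_distr[symmetric, OF meas]) simp
  also have "\<dots> \<le> \<tau> / \<sigma>"
  proof -
    have "emeasure (density lborel (normal_density 0 \<sigma>)) {-\<tau><..<\<tau>}
        = (\<integral>\<^sup>+ x. ennreal (normal_density 0 \<sigma> x) * indicator {-\<tau><..<\<tau>} x \<partial>lborel)"
      by (rule emeasure_density) auto
    also have "\<dots> \<le> (\<integral>\<^sup>+ x. ennreal (1 / (2 * \<sigma>)) * indicator {-\<tau><..<\<tau>} x \<partial>lborel)"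
      by (intro nn_integral_mono mult_right_mono ennreal_leI normal_density_le[OF sp]) auto
    also have "\<dots> = ennreal (1 / (2 * \<sigma>)) * emeasure lborel {-\<tau><..<\<tau>}"
      by (rule nn_integral_cmult_indicator) simp
    also have "\<dots> = ennreal (1 / (2 * \<sigma>)) * ennreal (2 * \<tau>)"
      using tp by simp
    also have "\<dots> = ennreal (1 / (2 * \<sigma>) * (2 * \<tau>))"
      by (rule ennreal_mult[symmetric]) (use tp sp in auto)
    also have "1 / (2 * \<sigma>) * (2 * \<tau>) = \<tau> / \<sigma>" using sp by simp
    finally have le: "emeasure (density lborel (normal_density 0 \<sigma>)) {-\<tau><..<\<tau>} \<le> ennreal (\<tau> / \<sigma>)" .
    have "enn2real (emeasure (density lborel (normal_density 0 \<sigma>)) {-\<tau><..<\<tau>}) \<le> enn2real (ennreal (\<tau> / \<sigma>))"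
      by (rule enn2real_mono[OF le]) simp
    then show ?thesis unfolding measure_def using tp sp by simp
  qed
  finally show ?thesis unfolding \<sigma>_def .
qed

lemma gauss_abs:
  assumes g: "gaussian d S mu" and qc: "quadf d S c > 0"
  shows "integrable mu (\<lambda>x. \<bar>dotp d c x\<bar>)"
    and "(\<integral>x. \<bar>dotp d c x\<bar> \<partial>mu) = sqrt (quadf d S c) * sqrt (2 / pi)"
proof -
  define \<sigma> where "\<sigma> = sqrt (quadf d S c)"
  have sp: "\<sigma> > 0" using qc unfolding \<sigma>_def by simp
  have meas: "dotp d c \<in> measurable mu borel" using dotp_meas[OF g] .
  have D: "distr mu borel (dotp d c) = density lborel (normal_density 0 \<sigma>)"
    using g qc unfolding gaussian_def \<sigma>_def by blast
  have hb: "has_bochner_integral lborel (\<lambda>x. normal_density 0 \<sigma> x *\<^sub>R \<bar>x\<bar>) (\<sigma> * sqrt (2 / pi))"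
    using normal_moment_abs_odd[of \<sigma> 0 0] sp by simp
  have hbd: "has_bochner_integral (density lborel (normal_density 0 \<sigma>)) abs (\<sigma> * sqrt (2 / pi))"
    by (rule has_bochner_integral_density) (use hb in auto)
  have int1: "integrable (distr mu borel (dotp d c)) abs" using hbd D by (simp add: has_bochner_integral_iff)
  then show "integrable mu (\<lambda>x. \<bar>dotp d c x\<bar>)"
    using integrable_distr_eq[OF meas, of abs] by simp
  have "(\<integral>x. \<bar>dotp d c x\<bar> \<partial>mu) = integral\<^sup>L (distr mu borel (dotp d c)) abs"
    by (rule integral_distr[symmetric, OF meas]) simp
  also have "\<dots> = \<sigma> * sqrt (2 / pi)" using hbd D by (simp add: has_bochner_integral_iff)
  finally show "(\<integral>x. \<bar>dotp d c x\<bar> \<partial>mu) = sqrt (quadf d S c) * sqrt (2 / pi)" unfolding \<sigma>_def .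
qed


lemma posdef_nonneg:
  assumes "posdef d S" shows "0 \<le> quadf d S w"
proof (cases "\<exists>i<d. w i \<noteq> 0")
  case True then show ?thesis using assms unfolding posdef_def by (simp add: less_imp_le)
next
  case False then have "quadf d S w = 0" unfolding quadf_def by simp
  then show ?thesis by simp
qed

lemma posdef_zero:
  assumes "posdef d S" "quadf d S w = 0" shows "\<forall>i<d. w i = 0"
proof (rule ccontr)
  assume "\<not> (\<forall>i<d. w i = 0)"
  then have "quadf d S w > 0" using assms(1) unfolding posdef_def by blast
  then show False using assms(2) by simp
qed

lemma sqrt_gap:
  fixes A B C Q :: real
  assumes "0 \<le> A" "0 \<le> B" "0 \<le> C" "0 < A + B" "C^2 = 2*A^2 + 2*B^2 - Q" "0 \<le> Q"
  shows "A + B - C \<le> Q / (A + B)"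
proof (cases "A + B - C \<le> 0")
  case True
  have "0 \<le> Q / (A + B)" using assms by simp
  then show ?thesis using True by linarith
next
  case False
  have "(A + B - C) * (A + B + C) = Q - (A - B)^2" using assms(5) by (simp add: power2_eq_square algebra_simps)
  also have "\<dots> \<le> Q" by simp
  finally have h1: "(A + B - C) * (A + B + C) \<le> Q" .
  have "(A + B - C) * (A + B) \<le> (A + B - C) * (A + B + C)"
    using False assms by (intro mult_left_mono) auto
  then have "(A + B - C) * (A + B) \<le> Q" using h1 by linarith
  then show ?thesis using assms by (simp add: field_simps)
qed

lemma sign_gap:
  fixes u v E :: real
  assumes "(u > 0) \<noteq> (v > 0)" "E \<le> \<bar>u\<bar>" "E \<le> \<bar>v\<bar>" "0 < E"
  shows "2 * E \<le> \<bar>u\<bar> + \<bar>v\<bar> - \<bar>u + v\<bar>"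
proof (cases "u > 0")
  case True
  then have "v \<le> 0" using assms(1) by auto
  then show ?thesis using True assms by linarith
next
  case False
  then have "v > 0" using assms(1) by auto
  then show ?thesis using False assms by linarith
qed

lemma err_bound:
  assumes g: "gaussian d S mu" and pd: "posdef d S"
    and Lp: "0 < L" and qa: "L \<le> quadf d S a" and qb: "L \<le> quadf d S b"
    and Ep: "0 < E" and qe: "quadf d S (\<lambda>i. a i - b i) \<le> E^2"
  shows "measure mu {x \<in> space mu. pos (dotp d b x) \<noteq> pos (dotp d a x)} \<le> 3 * E / sqrt L"
proof (cases "1 \<le> 3 * E / sqrt L")
  case True
  interpret prob_space mu using gaussian_prob[OF g] .
  show ?thesis using True prob_le_1 by (meson order_trans)
next
  case False
  interpret prob_space mu using gaussian_prob[OF g] .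
  have sL: "sqrt L > 0" using Lp by simp
  have Esmall: "3 * E < sqrt L" using False sL by (simp add: field_simps)
  have qap: "quadf d S a > 0" and qbp: "quadf d S b > 0" using Lp qa qb by auto
  define A where "A = sqrt (quadf d S a)"
  define B where "B = sqrt (quadf d S b)"
  define C where "C = sqrt (quadf d S (\<lambda>i. a i + b i))"
  define Q where "Q = quadf d S (\<lambda>i. a i - b i)"
  have AL: "sqrt L \<le> A" and BL: "sqrt L \<le> B" using qa qb unfolding A_def B_def by auto
  have ABp: "A + B > 0" using AL BL sL by linarith
  have qsp: "quadf d S (\<lambda>i. a i + b i) > 0"
  proof (rule ccontr)
    assume "\<not> ?thesis"
    then have "quadf d S (\<lambda>i. a i + b i) = 0" using posdef_nonneg[OF pd, of "\<lambda>i. a i + b i"] by linarith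
    then have z: "\<forall>i<d. a i + b i = 0" using posdef_zero[OF pd] by blast
    have "Q = quadf d S (\<lambda>i. 2 * a i)" unfolding Q_def by (rule quadf_cong) (use z in force)
    also have "\<dots> = 4 * quadf d S a" by (simp add: quadf_scale)
    finally have "4 * L \<le> E^2" using qa qe Q_def by linarith
    moreover have "E^2 < (sqrt L)^2" using Esmall Ep by (intro power_strict_mono) auto
    ultimately show False using Lp by simp
  qed
  have [measurable]: "dotp d a \<in> borel_measurable mu" "dotp d b \<in> borel_measurable mu"
    "dotp d (\<lambda>i. a i + b i) \<in> borel_measurable mu" using dotp_meas[OF g] by auto
  define G where "G = (\<lambda>x. \<bar>dotp d a x\<bar> + \<bar>dotp d b x\<bar> - \<bar>dotp d (\<lambda>i. a i + b i) x\<bar>)"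
  have intG: "integrable mu G" unfolding G_def
    using gauss_abs(1)[OF g qap] gauss_abs(1)[OF g qbp] gauss_abs(1)[OF g qsp] by auto
  have IG: "(\<integral>x. G x \<partial>mu) = (A + B - C) * sqrt (2 / pi)"
    unfolding G_def A_def B_def C_def
    using gauss_abs[OF g qap] gauss_abs[OF g qbp] gauss_abs[OF g qsp]
    by (simp add: algebra_simps)
  have gap: "A + B - C \<le> Q / (A + B)"
  proof (rule sqrt_gap)
    show "C^2 = 2*A^2 + 2*B^2 - Q" unfolding A_def B_def C_def Q_def
      using quadf_parallelogram[of d S a b] qap qbp qsp by simp
    show "0 \<le> A" "0 \<le> B" "0 \<le> C" using posdef_nonneg[OF pd] by (simp_all add: A_def B_def C_def)
    show "0 < A + B" using AL BL sL by linarith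
    show "0 \<le> Q" unfolding Q_def by (rule posdef_nonneg[OF pd])
  qed
  have s2pi: "sqrt (2 / pi) \<le> 1" using pi_gt3 by simp
  have "Q / (A + B) \<le> E^2 / (2 * sqrt L)"
    using qe AL BL sL posdef_nonneg[OF pd, of "\<lambda>i. a i - b i"] unfolding Q_def
    by (intro frac_le) auto
  then have IGb: "(\<integral>x. G x \<partial>mu) \<le> E^2 / (2 * sqrt L)"
  proof -
    have Qp: "Q / (A + B) \<ge> 0" using ABp posdef_nonneg[OF pd] unfolding Q_def by simp
    have "(A + B - C) * sqrt (2 / pi) \<le> Q / (A + B)"
    proof (cases "A + B - C \<ge> 0")
      case True
      note h = True
      have "(A + B - C) * sqrt (2 / pi) \<le> A + B - C" using mult_left_le[OF s2pi h] .
      then show ?thesis using gap by linarith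
    next
      case False
      then have h: "A + B - C < 0" by simp
      have "(A + B - C) * sqrt (2 / pi) \<le> 0" using h by (intro mult_nonpos_nonneg) auto
      then show ?thesis using Qp by linarith
    qed
    then show ?thesis using IG \<open>Q / (A + B) \<le> E^2 / (2 * sqrt L)\<close> by linarith
  qed
  have G0: "AE x in mu. 0 \<le> G x" unfolding G_def dotp_add
    by (intro AE_I2) (use abs_triangle_ineq in smt)
  have mk: "measure mu {x \<in> space mu. G x \<ge> 2 * E} \<le> (\<integral>x. G x \<partial>mu) / (2 * E)"
    by (rule integral_Markov_inequality_measure[OF intG sets.top G0]) (use Ep in simp)
  also have "\<dots> \<le> (E^2 / (2 * sqrt L)) / (2 * E)"
    using IGb Ep by (intro divide_right_mono) auto
  also have "\<dots> = E / (4 * sqrt L)" using Ep by (simp add: power2_eq_square field_simps)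
  finally have m1: "measure mu {x \<in> space mu. G x \<ge> 2 * E} \<le> E / (4 * sqrt L)" .
  have m2: "measure mu {x \<in> space mu. \<bar>dotp d a x\<bar> < E} \<le> E / sqrt L"
  proof -
    have "measure mu {x \<in> space mu. \<bar>dotp d a x\<bar> < E} \<le> E / A"
      using gauss_small[OF g qap Ep] unfolding A_def .
    also have "\<dots> \<le> E / sqrt L" proof -
      have "0 < A * sqrt L" using AL sL by (meson less_le_trans mult_pos_pos)
      then show ?thesis using AL Ep by (intro divide_left_mono) auto
    qed
    finally show ?thesis .
  qed
  have m3: "measure mu {x \<in> space mu. \<bar>dotp d b x\<bar> < E} \<le> E / sqrt L"
  proof -
    have "measure mu {x \<in> space mu. \<bar>dotp d b x\<bar> < E} \<le> E / B"
      using gauss_small[OF g qbp Ep] unfolding B_def .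
    also have "\<dots> \<le> E / sqrt L" proof -
      have "0 < B * sqrt L" using BL sL by (meson less_le_trans mult_pos_pos)
      then show ?thesis using BL Ep by (intro divide_left_mono) auto
    qed
    finally show ?thesis .
  qed
  have sub: "{x \<in> space mu. pos (dotp d b x) \<noteq> pos (dotp d a x)} \<subseteq>
     {x \<in> space mu. G x \<ge> 2 * E} \<union> {x \<in> space mu. \<bar>dotp d a x\<bar> < E} \<union> {x \<in> space mu. \<bar>dotp d b x\<bar> < E}"
  proof
    fix x assume x: "x \<in> {x \<in> space mu. pos (dotp d b x) \<noteq> pos (dotp d a x)}"
    have "G x = \<bar>dotp d a x\<bar> + \<bar>dotp d b x\<bar> - \<bar>dotp d a x + dotp d b x\<bar>"
      unfolding G_def by (simp add: dotp_add)
    then show "x \<in> {x \<in> space mu. G x \<ge> 2 * E} \<union> {x \<in> space mu. \<bar>dotp d a x\<bar> < E} \<union> {x \<in> space mu. \<bar>dotp d b x\<bar> < E}"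
      using x Ep sign_gap[of "dotp d a x" "dotp d b x" E] by (auto simp: pos_def split: if_splits)
  qed
  have "measure mu {x \<in> space mu. pos (dotp d b x) \<noteq> pos (dotp d a x)} \<le>
     measure mu ({x \<in> space mu. G x \<ge> 2 * E} \<union> {x \<in> space mu. \<bar>dotp d a x\<bar> < E} \<union> {x \<in> space mu. \<bar>dotp d b x\<bar> < E})"
    by (rule finite_measure_mono[OF sub]) (unfold G_def, measurable)
  also have "\<dots> \<le> measure mu ({x \<in> space mu. G x \<ge> 2 * E} \<union> {x \<in> space mu. \<bar>dotp d a x\<bar> < E}) + measure mu {x \<in> space mu. \<bar>dotp d b x\<bar> < E}"
    by (rule measure_Un_le) (unfold G_def, measurable)
  also have "\<dots> \<le> measure mu {x \<in> space mu. G x \<ge> 2 * E} + measure mu {x \<in> space mu. \<bar>dotp d a x\<bar> < E} + measure mu {x \<in> space mu. \<bar>dotp d b x\<bar> < E}"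
  proof -
    have "measure mu ({x \<in> space mu. G x \<ge> 2 * E} \<union> {x \<in> space mu. \<bar>dotp d a x\<bar> < E}) \<le>
       measure mu {x \<in> space mu. G x \<ge> 2 * E} + measure mu {x \<in> space mu. \<bar>dotp d a x\<bar> < E}"
      by (rule measure_Un_le) (unfold G_def, measurable)
    then show ?thesis by linarith
  qed
  also have "\<dots> \<le> E / (4 * sqrt L) + E / sqrt L + E / sqrt L" using m1 m2 m3 by linarith
  also have "\<dots> \<le> 3 * E / sqrt L" using Ep sL by (simp add: field_simps)
  finally show ?thesis .
qed


lemma sets_PiM_forall:
  assumes "finite T" "T \<subseteq> I" "\<And>i. i \<in> T \<Longrightarrow> X i \<in> sets (M i)"
  shows "{x \<in> space (PiM I M). \<forall>i\<in>T. x i \<in> X i} \<in> sets (PiM I M)"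
proof (rule sets.sets_Collect_finite_All[OF _ assms(1)])
  fix i assume i: "i \<in> T"
  have "(\<lambda>x. x i) \<in> measurable (PiM I M) (M i)"
    using i assms(2) by (intro measurable_component_singleton) auto
  from measurable_sets[OF this assms(3)[OF i]]
  show "{x \<in> space (PiM I M). x i \<in> X i} \<in> sets (PiM I M)"
    by (simp add: vimage_def Int_def conj_commute)
qed

lemma bag_bad_bound:
  fixes q :: nat
  assumes P: "\<And>j. prob_space (Mj j)" and Y: "\<And>j. j < q \<Longrightarrow> Y j \<in> sets (Mj j)"
  shows "measure (PiM {..<q} Mj) {B \<in> space (PiM {..<q} Mj). \<exists>j<q. B j \<in> Y j}
           \<le> (\<Sum>j<q. measure (Mj j) (Y j))"
proof -
  interpret M': prob_space "Mj j" for j using P .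
  interpret product_prob_space Mj "{..<q}" by unfold_locales
  have eq: "{B \<in> space (PiM {..<q} Mj). \<exists>j<q. B j \<in> Y j}
      = (\<Union>j\<in>{..<q}. {B \<in> space (PiM {..<q} Mj). B j \<in> Y j})" by auto
  have "measure (PiM {..<q} Mj) (\<Union>j\<in>{..<q}. {B \<in> space (PiM {..<q} Mj). B j \<in> Y j})
      \<le> (\<Sum>j<q. measure (PiM {..<q} Mj) {B \<in> space (PiM {..<q} Mj). B j \<in> Y j})"
    by (rule measure_UNION_le) (use Y in auto)
  also have "\<dots> = (\<Sum>j<q. measure (Mj j) (Y j))"
  proof (rule sum.cong[OF refl])
    fix j assume j: "j \<in> {..<q}"
    have "emeasure (PiM {..<q} Mj) {B \<in> space (PiM {..<q} Mj). B j \<in> Y j} = emeasure (Mj j) (Y j)"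
      using emeasure_PiM_Collect_single[of j "Y j"] j Y by auto
    then show "measure (PiM {..<q} Mj) {B \<in> space (PiM {..<q} Mj). B j \<in> Y j} = measure (Mj j) (Y j)"
      unfolding measure_def by simp
  qed
  finally show ?thesis using eq by simp
qed

lemma binom_union_bound:
  assumes P: "prob_space P" and X: "X \<in> sets P" and p: "measure P X \<le> p"
  shows "measure (PiM {..<s} (\<lambda>_. P))
     (\<Union>T\<in>{T. T \<subseteq> {..<s} \<and> card T = m}. {M \<in> space (PiM {..<s} (\<lambda>_. P)). \<forall>i\<in>T. M i \<in> X})
     \<le> real (s choose m) * p^m"
proof -
  interpret M': prob_space P using P .
  interpret product_prob_space "\<lambda>_. P" "{..<s}" by unfold_locales
  let ?Ts = "{T. T \<subseteq> {..<s} \<and> card T = m}"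
  have finTs: "finite ?Ts" by (rule finite_subset[of _ "Pow {..<s}"]) auto
  have "measure (PiM {..<s} (\<lambda>_. P))
     (\<Union>T\<in>?Ts. {M \<in> space (PiM {..<s} (\<lambda>_. P)). \<forall>i\<in>T. M i \<in> X})
     \<le> (\<Sum>T\<in>?Ts. measure (PiM {..<s} (\<lambda>_. P)) {M \<in> space (PiM {..<s} (\<lambda>_. P)). \<forall>i\<in>T. M i \<in> X})"
    by (rule measure_UNION_le[OF finTs])
       (auto intro!: sets_PiM_forall X intro: finite_subset)
  also have "\<dots> = (\<Sum>T\<in>?Ts. measure P X ^ m)"
  proof (rule sum.cong[OF refl])
    fix T assume T: "T \<in> ?Ts"
    then have fT: "finite T" using finite_subset by blast
    have "emeasure (PiM {..<s} (\<lambda>_. P)) {M \<in> space (PiM {..<s} (\<lambda>_. P)). \<forall>i\<in>T. M i \<in> X}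
        = (\<Prod>i\<in>T. emeasure P X)"
      by (rule emeasure_PiM_Collect) (use T fT X in auto)
    also have "\<dots> = ennreal (measure P X ^ m)"
      using T by (simp add: M'.emeasure_eq_measure ennreal_power measure_nonneg)
    finally show "measure (PiM {..<s} (\<lambda>_. P)) {M \<in> space (PiM {..<s} (\<lambda>_. P)). \<forall>i\<in>T. M i \<in> X}
        = measure P X ^ m" unfolding measure_def by simp
  qed
  also have "\<dots> = real (card ?Ts) * measure P X ^ m" by simp
  also have "card ?Ts = s choose m" using n_subsets[of "{..<s}" m] by simp
  also have "real (s choose m) * measure P X ^ m \<le> real (s choose m) * p ^ m"
    using p by (intro mult_left_mono power_mono) (auto simp: measure_nonneg)
  finally show ?thesis .
qed

lemma gauss_zero:
  assumes g: "gaussian d S mu" and qc: "quadf d S c > 0"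
  shows "measure mu {x \<in> space mu. dotp d c x = 0} = 0"
proof -
  let ?p = "measure mu {x \<in> space mu. dotp d c x = 0}"
  define \<sigma> where "\<sigma> = sqrt (quadf d S c)"
  have sp: "\<sigma> > 0" using qc unfolding \<sigma>_def by simp
  interpret prob_space mu using gaussian_prob[OF g] .
  have [measurable]: "dotp d c \<in> borel_measurable mu" using dotp_meas[OF g] .
  have le: "?p \<le> t / \<sigma>" if t: "t > 0" for t
  proof -
    have "?p \<le> measure mu {x \<in> space mu. \<bar>dotp d c x\<bar> < t}"
      by (rule finite_measure_mono) (use t in auto)
    also have "\<dots> \<le> t / \<sigma>" using gauss_small[OF g qc t] unfolding \<sigma>_def .
    finally show ?thesis .
  qed
  show ?thesis
  proof (rule ccontr)
    assume "?p \<noteq> 0"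
    then have pp: "?p > 0" using measure_nonneg[of mu] by (simp add: less_le)
    have "?p \<le> (?p * \<sigma> / 2) / \<sigma>" by (rule le) (use pp sp in simp)
    then show False using pp sp by simp
  qed
qed

lemma gauss_half:
  assumes g: "gaussian d S mu" and qc: "quadf d S c > 0"
  shows "measure mu {x \<in> space mu. dotp d c x > 0} = 1/2"
    and "measure mu {x \<in> space mu. \<not> dotp d c x > 0} = 1/2"
proof -
  interpret prob_space mu using gaussian_prob[OF g] .
  have [measurable]: "dotp d c \<in> borel_measurable mu" "dotp d (\<lambda>i. - c i) \<in> borel_measurable mu"
    using dotp_meas[OF g] by auto
  have qn: "quadf d S (\<lambda>i. - c i) > 0" using qc by (simp add: quadf_uminus)
  have D1: "distr mu borel (dotp d c) = density lborel (normal_density 0 (sqrt (quadf d S c)))"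
    using g qc unfolding gaussian_def by blast
  have D2: "distr mu borel (dotp d (\<lambda>i. - c i)) = density lborel (normal_density 0 (sqrt (quadf d S c)))"
  proof -
    have "distr mu borel (dotp d (\<lambda>i. - c i)) = density lborel (normal_density 0 (sqrt (quadf d S (\<lambda>i. - c i))))"
      using g qn unfolding gaussian_def by blast
    then show ?thesis by (simp add: quadf_uminus)
  qed
  have "measure mu {x \<in> space mu. dotp d c x > 0} = measure (distr mu borel (dotp d c)) {0<..}"
    by (subst measure_distr) (auto intro!: arg_cong[where f="measure mu"])
  also have "\<dots> = measure (distr mu borel (dotp d (\<lambda>i. - c i))) {0<..}" using D1 D2 by simp
  also have "\<dots> = measure mu {x \<in> space mu. dotp d c x < 0}"
    by (subst measure_distr) (auto intro!: arg_cong[where f="measure mu"] simp: dotp_minus)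
  finally have sym: "measure mu {x \<in> space mu. dotp d c x > 0} = measure mu {x \<in> space mu. dotp d c x < 0}" .
  have z: "measure mu {x \<in> space mu. dotp d c x = 0} = 0" by (rule gauss_zero[OF g qc])
  have compl: "measure mu {x \<in> space mu. \<not> dotp d c x > 0} = 1 - measure mu {x \<in> space mu. dotp d c x > 0}"
  proof -
    have "{x \<in> space mu. \<not> dotp d c x > 0} = space mu - {x \<in> space mu. dotp d c x > 0}" by auto
    then show ?thesis using prob_compl[of "{x \<in> space mu. dotp d c x > 0}"] by simp
  qed
  have un: "measure mu {x \<in> space mu. \<not> dotp d c x > 0} \<le>
      measure mu {x \<in> space mu. dotp d c x < 0} + measure mu {x \<in> space mu. dotp d c x = 0}"
  proof -
    have "{x \<in> space mu. \<not> dotp d c x > 0} = {x \<in> space mu. dotp d c x < 0} \<union> {x \<in> space mu. dotp d c x = 0}"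
      by auto
    then show ?thesis using measure_Un_le[of "{x \<in> space mu. dotp d c x < 0}" mu "{x \<in> space mu. dotp d c x = 0}"]
      by simp
  qed
  have mo: "measure mu {x \<in> space mu. dotp d c x < 0} \<le> measure mu {x \<in> space mu. \<not> dotp d c x > 0}"
    by (rule finite_measure_mono) auto
  show "measure mu {x \<in> space mu. dotp d c x > 0} = 1/2" using sym z compl un mo by linarith
  then show "measure mu {x \<in> space mu. \<not> dotp d c x > 0} = 1/2" using compl by simp
qed


lemma pos_meas[measurable]: "pos \<in> borel_measurable borel"
  unfolding pos_def by measurable

lemma card_as_sum: "real (card {i \<in> {..<s::nat}. P i}) = (\<Sum>i<s. if P i then 1 else 0)"
  by (simp add: sum.If_cases Int_def)

lemma be_meas:
  fixes h :: "'b \<Rightarrow> real" and Mj :: "nat \<Rightarrow> 'b measure"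
  assumes hm: "\<And>j. j < q \<Longrightarrow> h \<in> borel_measurable (Mj j)"
  shows "(\<lambda>M. bag_err_sample h q k s M) \<in> borel_measurable (PiM {..<s} (\<lambda>_. PiM {..<q} Mj))"
proof -
  let ?Bm = "PiM {..<s} (\<lambda>_. PiM {..<q} Mj)"
  have hij: "(\<lambda>M. h (M i j)) \<in> borel_measurable ?Bm" if "i < s" "j < q" for i j
  proof -
    have "(\<lambda>M. M i) \<in> measurable ?Bm (PiM {..<q} Mj)"
      using that by (intro measurable_component_singleton) auto
    moreover have "(\<lambda>B. B j) \<in> measurable (PiM {..<q} Mj) (Mj j)"
      using that by (intro measurable_component_singleton) auto
    ultimately have "(\<lambda>M. M i j) \<in> measurable ?Bm (Mj j)" by (rule measurable_compose)
    then show ?thesis using hm[OF that(2)] by (rule measurable_compose)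
  qed
  have sm: "(\<lambda>M. \<Sum>j<q. h (M i j)) \<in> borel_measurable ?Bm" if "i < s" for i
    using hij that by (intro borel_measurable_sum) auto
  have "(\<lambda>M. (\<Sum>i<s. if (\<Sum>j<q. h (M i j)) / real q \<noteq> real k / real q then 1 else 0) / real s)
      \<in> borel_measurable ?Bm"
  proof -
    have "(\<lambda>M. (\<Sum>i<s. if (\<Sum>j<q. h (M i j)) / real q \<noteq> real k / real q then 1 else 0::real))
      \<in> borel_measurable ?Bm"
    proof (intro borel_measurable_sum)
      fix i assume "i \<in> {..<s}"
      then have [measurable]: "(\<lambda>M. \<Sum>j<q. h (M i j)) \<in> borel_measurable ?Bm" using sm by auto
      show "(\<lambda>M. if (\<Sum>j<q. h (M i j)) / real q \<noteq> real k / real q then 1 else 0::real) \<in> borel_measurable ?Bm"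
        by measurable
    qed
    then show ?thesis by (rule borel_measurable_divide) simp
  qed
  then show ?thesis unfolding bag_err_sample_def card_as_sum .
qed


lemma pos_neg: "t \<noteq> 0 \<Longrightarrow> pos (- t) = 1 - pos t"
  unfolding pos_def by auto

lemma sum_indicator_lt: "k \<le> q \<Longrightarrow> (\<Sum>j<q. if j < k then 1 else 0 :: real) = real k"
proof -
  assume kq: "k \<le> q"
  have "(\<Sum>j<q. if j < k then 1 else 0 :: real) = real (card {j \<in> {..<q}. j < k})"
    using card_as_sum[of q "\<lambda>j. j < k"] by simp
  also have "{j \<in> {..<q}. j < k} = {..<k}" using kq by auto
  finally show ?thesis by simp
qed

lemma core:
  fixes mu :: "(nat \<Rightarrow> real) measure"
  assumes g: "gaussian d S mu" and pd: "posdef d S"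
    and Lp: "0 < L" and qrs: "L \<le> quadf d S rs" and qg: "L \<le> quadf d S gv"
    and Ep: "0 < E" and qe: "quadf d S (\<lambda>i. rs i - gv i) \<le> E^2"
    and q0: "0 < q" and kq: "k \<le> q" and kh: "2 * k \<noteq> q"
    and bnd: "3 * E / sqrt L \<le> bound"
    and small: "bound < 1 \<Longrightarrow> 2 * real q * (3 * E / sqrt L) \<le> 1/64"
    and s0: "0 < s" and sd: "(1/4::real)^s \<le> \<delta>/2"
  shows "measure (PiM {..<s} (\<lambda>_. bag_oracle (\<lambda>x. pos (dotp d rs x)) mu q k))
     {M \<in> space (PiM {..<s} (\<lambda>_. bag_oracle (\<lambda>x. pos (dotp d rs x)) mu q k)).
       (bag_err_sample (\<lambda>x. pos (dotp d gv x)) q k s M \<le> bag_err_sample (\<lambda>x. pos (- dotp d gv x)) q k s M \<longrightarrow>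
          measure mu {x \<in> space mu. pos (dotp d gv x) \<noteq> pos (dotp d rs x)} \<le> bound) \<and>
       (bag_err_sample (\<lambda>x. pos (- dotp d gv x)) q k s M \<le> bag_err_sample (\<lambda>x. pos (dotp d gv x)) q k s M \<longrightarrow>
          measure mu {x \<in> space mu. pos (- dotp d gv x) \<noteq> pos (dotp d rs x)} \<le> bound)}
     \<ge> 1 - \<delta>/2"
proof -
  define f where "f = (\<lambda>x. pos (dotp d rs x))"
  define h1 where "h1 = (\<lambda>x. pos (dotp d gv x))"
  define h2 where "h2 = (\<lambda>x. pos (- dotp d gv x))"
  interpret mu: prob_space mu using gaussian_prob[OF g] .
  have [measurable]: "dotp d rs \<in> borel_measurable mu" "dotp d gv \<in> borel_measurable mu"
    using dotp_meas[OF g] by auto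
  have fm[measurable]: "f \<in> borel_measurable mu" "h1 \<in> borel_measurable mu" "h2 \<in> borel_measurable mu"
    unfolding f_def h1_def h2_def by measurable
  define A1 where "A1 = {x \<in> space mu. f x = 1}"
  define A0 where "A0 = {x \<in> space mu. f x = 0}"
  have A1eq: "A1 = {x \<in> space mu. dotp d rs x > 0}" by (auto simp: A1_def f_def pos_def)
  have A0eq: "A0 = {x \<in> space mu. \<not> dotp d rs x > 0}" by (auto simp: A0_def f_def pos_def)
  have qrsp: "quadf d S rs > 0" and qgp: "quadf d S gv > 0" using Lp qrs qg by auto
  have mA1: "measure mu A1 = 1/2" using gauss_half(1)[OF g qrsp] A1eq by simp
  have mA0: "measure mu A0 = 1/2" using gauss_half(2)[OF g qrsp] A0eq by simp
  have sA[measurable]: "A1 \<in> sets mu" "A0 \<in> sets mu" unfolding A1_def A0_def by measurable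
  have eA1: "emeasure mu A1 \<noteq> 0" "emeasure mu A1 \<noteq> \<infinity>" using mA1 by (auto simp: mu.emeasure_eq_measure)
  have eA0: "emeasure mu A0 \<noteq> 0" "emeasure mu A0 \<noteq> \<infinity>" using mA0 by (auto simp: mu.emeasure_eq_measure)
  define Mj where "Mj = (\<lambda>j. if j < k then uniform_measure mu A1 else uniform_measure mu A0)"
  have bag_eq: "bag_oracle f mu q k = PiM {..<q} Mj"
    unfolding bag_oracle_def Mj_def A1_def A0_def ..
  have PMj: "prob_space (Mj j)" for j
    unfolding Mj_def using prob_space_uniform_measure[OF eA1] prob_space_uniform_measure[OF eA0] by auto
  have sMj: "sets (Mj j) = sets mu" "space (Mj j) = space mu" for j unfolding Mj_def by auto
  define bag where "bag = PiM {..<q} Mj"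
  have Pbag: "prob_space bag" unfolding bag_def by (rule prob_space_PiM) (rule PMj)
  define Bm where "Bm = PiM {..<s} (\<lambda>_. bag)"
  interpret Bm: prob_space Bm unfolding Bm_def by (rule prob_space_PiM) (rule Pbag)
  define err where "err g = measure mu {x \<in> space mu. g x \<noteq> f x}" for g
  have e1: "err h1 \<le> 3 * E / sqrt L"
    using err_bound[OF g pd Lp qrs qg Ep qe] unfolding err_def h1_def f_def .
  have e1b: "err h1 \<le> bound" using e1 bnd by linarith
  define Good where "Good = {M \<in> space Bm. (bag_err_sample h1 q k s M \<le> bag_err_sample h2 q k s M \<longrightarrow> err h1 \<le> bound) \<and>
       (bag_err_sample h2 q k s M \<le> bag_err_sample h1 q k s M \<longrightarrow> err h2 \<le> bound)}"
  have "(1/4::real)^s > 0" by simp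
  then have dpos: "\<delta> > 0" using sd by linarith
  have "1 - \<delta>/2 \<le> measure Bm Good"
  proof (cases "bound < 1 \<and> \<not> err h2 \<le> bound")
    case False
    then have "err h2 \<le> bound" using mu.prob_le_1 unfolding err_def by (meson le_less_linear order_trans)
    then have "Good = space Bm" unfolding Good_def using e1b by auto
    then show ?thesis using Bm.prob_space dpos by simp
  next
    case True
    then have bl1: "bound < 1" and e2: "\<not> err h2 \<le> bound" by auto
    define Y where "Y j = {x \<in> space mu. x \<notin> (if j < k then A1 else A0) \<or> h1 x \<noteq> f x \<or> dotp d gv x = 0}" for j
    have hfs: "{x \<in> space mu. h1 x \<noteq> f x} \<in> sets mu"
    proof -
      have "{x \<in> space mu. h1 x \<noteq> f x} = space mu - {x \<in> space mu. h1 x - f x = 0}" by auto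
      moreover have "{x \<in> space mu. h1 x - f x = 0} \<in> sets mu" by measurable
      ultimately show ?thesis by auto
    qed
    have gzs: "{x \<in> space mu. dotp d gv x = 0} \<in> sets mu" by measurable
    have sY: "Y j \<in> sets (Mj j)" for j
    proof -
      have "Y j = (space mu - (if j < k then A1 else A0)) \<union> {x \<in> space mu. h1 x \<noteq> f x} \<union> {x \<in> space mu. dotp d gv x = 0}"
        unfolding Y_def by auto
      moreover note hfs gzs
      moreover have "space mu - (if j < k then A1 else A0) \<in> sets mu" by auto
      ultimately show ?thesis unfolding sMj by auto
    qed
    define Bad where "Bad = {B \<in> space bag. \<exists>j<q. B j \<in> Y j}"
    have sBad: "Bad \<in> sets bag"
    proof -
      have "Bad = (\<Union>j\<in>{..<q}. {B \<in> space bag. B j \<in> Y j})" unfolding Bad_def by auto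
      moreover have "{B \<in> space bag. B j \<in> Y j} \<in> sets bag" if "j < q" for j
        using sets_PiM_forall[of "{j}" "{..<q}" "\<lambda>_. Y j" Mj] sY that unfolding bag_def by auto
      ultimately show ?thesis by auto
    qed
    have z: "measure mu {x \<in> space mu. dotp d gv x = 0} = 0" by (rule gauss_zero[OF g qgp])
    have mY: "measure (Mj j) (Y j) \<le> 2 * err h1" for j
    proof -
      define A where "A = (if j < k then A1 else A0)"
      have MjA: "Mj j = uniform_measure mu A" unfolding Mj_def A_def by simp
      have eA: "emeasure mu A \<noteq> 0" "emeasure mu A \<noteq> \<infinity>" and mA: "measure mu A = 1/2"
        unfolding A_def using eA1 eA0 mA1 mA0 by auto
      have sYm: "Y j \<in> sets mu" using sY sMj by auto
      have "measure (Mj j) (Y j) = measure mu (A \<inter> Y j) / measure mu A"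
        unfolding MjA by (rule measure_uniform_measure[OF eA sYm])
      also have "\<dots> = 2 * measure mu (A \<inter> Y j)" unfolding mA by simp
      also have "measure mu (A \<inter> Y j) \<le> measure mu ({x \<in> space mu. h1 x \<noteq> f x} \<union> {x \<in> space mu. dotp d gv x = 0})"
        by (rule mu.finite_measure_mono) (use hfs gzs in \<open>auto simp: Y_def A_def\<close>)
      also have "\<dots> \<le> measure mu {x \<in> space mu. h1 x \<noteq> f x} + measure mu {x \<in> space mu. dotp d gv x = 0}"
        by (rule measure_Un_le[OF hfs gzs])
      finally show ?thesis using z unfolding err_def by simp
    qed
    have pBad: "measure bag Bad \<le> 1/64"
    proof -
      have "measure bag Bad \<le> (\<Sum>j<q. measure (Mj j) (Y j))"
        unfolding Bad_def bag_def by (rule bag_bad_bound[OF PMj]) (rule sY)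
      also have "\<dots> \<le> (\<Sum>j<q. 2 * err h1)" by (intro sum_mono mY)
      also have "\<dots> = 2 * real q * err h1" by simp
      also have "\<dots> \<le> 2 * real q * (3 * E / sqrt L)" using e1 by (intro mult_left_mono) auto
      also have "\<dots> \<le> 1/64" using small[OF bl1] .
      finally show ?thesis .
    qed
    define m where "m = (s + 1) div 2"
    define U where "U = (\<Union>T\<in>{T. T \<subseteq> {..<s} \<and> card T = m}. {M \<in> space Bm. \<forall>i\<in>T. M i \<in> Bad})"
    have mU: "measure Bm U \<le> real (s choose m) * (1/64)^m"
      unfolding U_def Bm_def by (rule binom_union_bound[OF Pbag sBad pBad])
    also have "\<dots> \<le> 2^s * (1/8)^s"
    proof (rule mult_mono)
      show "real (s choose m) \<le> 2^s" using binomial_le_pow2[of s m] by (metis of_nat_le_iff of_nat_numeral of_nat_power)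
      have "(1/64::real)^m = ((1/8)^2)^m" by (simp add: power2_eq_square)
      also have "\<dots> = (1/8)^(2*m)" by (simp only: power_mult)
      also have "\<dots> \<le> (1/8)^s" by (rule power_decreasing) (auto simp: m_def)
      finally show "(1/64::real)^m \<le> (1/8)^s" .
    qed auto
    also have "\<dots> = (1/4)^s" by (simp add: power_mult_distrib[symmetric])
    finally have mU2: "measure Bm U \<le> \<delta>/2" using sd by linarith
    have sU: "U \<in> sets Bm"
    proof -
      have fin: "finite {T. T \<subseteq> {..<s} \<and> card T = m}" by (rule finite_subset[of _ "Pow {..<s}"]) auto
      have "{M \<in> space Bm. \<forall>i\<in>T. M i \<in> Bad} \<in> sets Bm" if "T \<subseteq> {..<s}" for T
        unfolding Bm_def using that sBad by (intro sets_PiM_forall) (auto intro: finite_subset)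
      then show ?thesis unfolding U_def using fin by auto
    qed
    define Ebad where "Ebad = {M \<in> space Bm. bag_err_sample h2 q k s M \<le> bag_err_sample h1 q k s M}"
    have sE: "Ebad \<in> sets Bm"
    proof -
      have hMj: "h1 \<in> borel_measurable (Mj j)" "h2 \<in> borel_measurable (Mj j)" for j
        by (subst measurable_cong_sets[OF sMj(1) refl], rule fm)+
      have "(\<lambda>M. bag_err_sample h1 q k s M) \<in> borel_measurable Bm"
        unfolding Bm_def bag_def by (rule be_meas) (rule hMj)
      moreover have "(\<lambda>M. bag_err_sample h2 q k s M) \<in> borel_measurable Bm"
        unfolding Bm_def bag_def by (rule be_meas) (rule hMj)
      ultimately show ?thesis unfolding Ebad_def by measurable
    qed
    have sub: "Ebad \<subseteq> U"
    proof
      fix M assume ME: "M \<in> Ebad"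
      then have MB: "M \<in> space Bm" unfolding Ebad_def by auto
      have Mi: "M i \<in> space bag" if "i < s" for i
        using MB that unfolding Bm_def by (auto simp: space_PiM PiE_iff)
      define N where "N = {i \<in> {..<s}. M i \<in> Bad}"
      have goodbag: "(\<Sum>j<q. h1 (M i j)) = real k \<and> (\<Sum>j<q. h2 (M i j)) = real q - real k"
        if i: "i < s" "i \<notin> N" for i
      proof -
        have nb: "M i \<notin> Bad" using i unfolding N_def by auto
        have sp: "M i j \<in> space mu" if "j < q" for j
          using Mi[OF i(1)] that unfolding bag_def by (auto simp: space_PiM PiE_iff sMj)
        have nY: "M i j \<notin> Y j" if "j < q" for j
          using nb Mi[OF i(1)] that unfolding Bad_def by auto
        have h1f: "h1 (M i j) = (if j < k then 1 else 0)" if "j < q" for j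
        proof -
          have "M i j \<in> (if j < k then A1 else A0)" "h1 (M i j) = f (M i j)"
            using nY[OF that] sp[OF that] unfolding Y_def by auto
          then show ?thesis unfolding A1_def A0_def by (auto split: if_splits)
        qed
        have h2f: "h2 (M i j) = 1 - h1 (M i j)" if "j < q" for j
        proof -
          have "dotp d gv (M i j) \<noteq> 0" using nY[OF that] sp[OF that] unfolding Y_def by auto
          then show ?thesis unfolding h1_def h2_def by (rule pos_neg)
        qed
        have s1: "(\<Sum>j<q. h1 (M i j)) = real k"
          using sum.cong[OF refl h1f, of "{..<q}"] sum_indicator_lt[OF kq] by simp
        have "(\<Sum>j<q. h2 (M i j)) = (\<Sum>j<q. 1 - h1 (M i j))" by (rule sum.cong) (auto simp: h2f)
        also have "\<dots> = real q - real k" using s1 by (simp add: sum_subtractf)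
        finally show ?thesis using s1 by simp
      qed
      define P1 where "P1 = {i \<in> {..<s}. (\<Sum>j<q. h1 (M i j)) / real q \<noteq> real k / real q}"
      define P2 where "P2 = {i \<in> {..<s}. (\<Sum>j<q. h2 (M i j)) / real q \<noteq> real k / real q}"
      have P1N: "P1 \<subseteq> N" unfolding P1_def using goodbag by auto
      have qk: "real q - real k \<noteq> real k" using kh by linarith
      have NP2: "{..<s} - N \<subseteq> P2"
      proof
        fix i assume "i \<in> {..<s} - N"
        then have "i < s" "i \<notin> N" by auto
        then have "(\<Sum>j<q. h2 (M i j)) = real q - real k" using goodbag by blast
        then show "i \<in> P2" unfolding P2_def using \<open>i < s\<close> qk q0 by (auto simp: divide_cancel_right)
      qed
      have "bag_err_sample h2 q k s M \<le> bag_err_sample h1 q k s M" using ME unfolding Ebad_def by auto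
      then have "real (card P2) / real s \<le> real (card P1) / real s"
        unfolding bag_err_sample_def P1_def P2_def .
      then have c21: "card P2 \<le> card P1" using s0 by (simp add: divide_right_mono_neg divide_le_cancel)
      have "card ({..<s} - N) \<le> card P2" by (rule card_mono[OF _ NP2]) (simp add: P2_def)
      moreover have "card P1 \<le> card N" by (rule card_mono[OF _ P1N]) (simp add: N_def)
      moreover have "card ({..<s} - N) = s - card N"
        by (subst card_Diff_subset) (auto simp: N_def)
      ultimately have "s - card N \<le> card N" using c21 by linarith
      then have "m \<le> card N" unfolding m_def by linarith
      then obtain T where T: "T \<subseteq> N" "card T = m" by (meson obtain_subset_with_card_n)
      then have "T \<subseteq> {..<s}" unfolding N_def by auto
      moreover have "\<forall>i\<in>T. M i \<in> Bad" using T unfolding N_def by auto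
      ultimately show "M \<in> U" unfolding U_def using MB T by auto
    qed
    have "Good = space Bm - Ebad" unfolding Good_def Ebad_def using e1b e2 by auto
    then have "measure Bm Good = 1 - measure Bm Ebad" using Bm.prob_compl[OF sE] by simp
    moreover have "measure Bm Ebad \<le> measure Bm U" by (rule Bm.finite_measure_mono[OF sub sU])
    ultimately show ?thesis using mU2 by linarith
  qed
  then show ?thesis
    unfolding Good_def Bm_def bag_def bag_eq[symmetric] err_def f_def h1_def h2_def .
qed


lemma eig_pos:
  assumes pd: "posdef d S" and ev: "is_eigenvalue d S l"
  shows "0 < l"
proof -
  obtain v where v: "\<exists>i<d. v i \<noteq> 0" "\<forall>i<d. (\<Sum>j<d. S i j * v j) = l * v i"
    using ev unfolding is_eigenvalue_def by blast
  have "quadf d S v = (\<Sum>i<d. v i * (\<Sum>j<d. S i j * v j))"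
    unfolding quadf_def by (simp add: sum_distrib_left mult_ac)
  also have "\<dots> = (\<Sum>i<d. v i * (l * v i))" using v(2) by (intro sum.cong) auto
  also have "\<dots> = l * sumsq d v" unfolding sumsq_def by (simp add: sum_distrib_left power2_eq_square mult_ac)
  finally have "0 < l * sumsq d v" using pd v(1) unfolding posdef_def by auto
  then show ?thesis using sumsq_nonneg[of d v] by (simp add: zero_less_mult_iff)
qed

lemma s_bound:
  fixes s d q :: nat and \<epsilon> \<delta> :: real
  assumes "1 \<le> d" "2 \<le> q" "0 < \<epsilon>" "\<epsilon> < 1" "0 < \<delta>" "\<delta> < 1"
    and "real s \<ge> 1 * real d * (ln (real q) + ln (1 / \<delta>)) / \<epsilon>\<^sup>2"
  shows "(1/4::real)^s \<le> \<delta>/2" "0 < s"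
proof -
  define X where "X = ln (real q) + ln (1 / \<delta>)"
  have lq: "ln 2 \<le> ln (real q)" using assms by simp
  have l2: "0 < ln (2::real)" by simp
  have ld: "0 < ln (1 / \<delta>)" using assms by simp
  have Xp: "X > 0" unfolding X_def using lq l2 ld by linarith
  have e2: "\<epsilon>\<^sup>2 < 1" "0 < \<epsilon>\<^sup>2" using assms by (auto simp: power_less_one_iff)
  have "X \<le> real d * X / \<epsilon>\<^sup>2"
  proof -
    have "X * 1 \<le> X * (real d / \<epsilon>\<^sup>2)" using Xp e2 assms(1)
      by (intro mult_left_mono) (auto simp: field_simps)
    then show ?thesis by (simp add: mult.commute)
  qed
  then have sX: "X \<le> real s" using assms(7) unfolding X_def by simp
  then show "0 < s" using Xp by simp
  have "(1/4::real)^s \<le> exp (- real s)"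
  proof -
    have "exp (real s) = exp 1 ^ s" using exp_of_nat_mult[of s 1] by simp
    also have "\<dots> \<le> 4 ^ s" using exp_le by (intro power_mono) auto
    finally have "exp (real s) \<le> 4^s" .
    then have "1 / 4^s \<le> 1 / exp (real s)" by (intro divide_left_mono) auto
    then show ?thesis by (simp add: exp_minus power_one_over field_simps)
  qed
  also have "\<dots> \<le> exp (- (ln 2 + ln (1 / \<delta>)))" using sX lq unfolding X_def by simp
  also have "\<dots> = \<delta> / 2"
  proof -
    have "exp (- (ln 2 + ln (1 / \<delta>))) = inverse (exp (ln 2) * exp (ln (1 / \<delta>)))"
      by (simp only: exp_minus exp_add)
    also have "\<dots> = inverse (2 * (1 / \<delta>))" using assms by simp
    finally show ?thesis by simp
  qed
  finally show "(1/4::real)^s \<le> \<delta>/2" .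
qed

lemma Collect_conj_swap: "{M \<in> A. P M \<and> Q M} = {M \<in> A. Q M \<and> P M}" by blast

theorem lemma5:
  shows "\<exists>C c0 :: real. C > 0 \<and> c0 > 0 \<and>
   (\<forall>(d::nat) (S::nat \<Rightarrow> nat \<Rightarrow> real) (lmax::real) (lmin::real) (rs::nat \<Rightarrow> real)
      (q::nat) (k::nat) (\<epsilon>::real) (\<delta>::real) (rh::nat \<Rightarrow> real) (s::nat)
      (mu::(nat \<Rightarrow> real) measure).
     sym_mat d S \<and> posdef d S \<and>
     is_eigenvalue d S lmax \<and> (\<forall>l. is_eigenvalue d S l \<longrightarrow> l \<le> lmax) \<and>
     is_eigenvalue d S lmin \<and> (\<forall>l. is_eigenvalue d S l \<longrightarrow> lmin \<le> l) \<and>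
     gaussian d S mu \<and>
     vnorm d rs = 1 \<and> 2 \<le> q \<and> 1 \<le> k \<and> k \<le> q - 1 \<and> 2 * k \<noteq> q \<and>
     0 < \<epsilon> \<and> \<epsilon> < 1 \<and> 0 < \<delta> \<and> \<delta> < 1 \<and>
     vnorm d rh = 1 \<and>
     min (vnorm d (\<lambda>i. rh i - rs i)) (vnorm d (\<lambda>i. rh i + rs i)) \<le> \<epsilon> \<and>
     real s \<ge> C * real d * (ln (real q) + ln (1 / \<delta>)) / \<epsilon>\<^sup>2
     \<longrightarrow>
     (let f = (\<lambda>x. pos (dotp d rs x));
          h = (\<lambda>x. pos (dotp d rh x));
          ht = (\<lambda>x. pos (- dotp d rh x));
          Bm = PiM {..<s} (\<lambda>_. bag_oracle f mu q k);
          bound = 16 * c0 * real q * \<epsilon> * sqrt (lmax / lmin);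
          err = (\<lambda>g. measure mu {x \<in> space mu. g x \<noteq> f x})
      in measure Bm {M \<in> space Bm.
            (bag_err_sample h q k s M \<le> bag_err_sample ht q k s M \<longrightarrow> err h \<le> bound) \<and>
            (bag_err_sample ht q k s M \<le> bag_err_sample h q k s M \<longrightarrow> err ht \<le> bound)}
         \<ge> 1 - \<delta> / 2))"
proof (rule exI[of _ "1::real"], rule exI[of _ "24::real"], intro conjI allI impI)
  fix d :: nat and S :: "nat \<Rightarrow> nat \<Rightarrow> real" and lmax lmin :: real and rs :: "nat \<Rightarrow> real"
    and q k :: nat and \<epsilon> \<delta> :: real and rh :: "nat \<Rightarrow> real" and s :: nat
    and mu :: "(nat \<Rightarrow> real) measure"
  assume H: "sym_mat d S \<and> posdef d S \<and>
     is_eigenvalue d S lmax \<and> (\<forall>l. is_eigenvalue d S l \<longrightarrow> l \<le> lmax) \<and>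
     is_eigenvalue d S lmin \<and> (\<forall>l. is_eigenvalue d S l \<longrightarrow> lmin \<le> l) \<and>
     gaussian d S mu \<and>
     vnorm d rs = 1 \<and> 2 \<le> q \<and> 1 \<le> k \<and> k \<le> q - 1 \<and> 2 * k \<noteq> q \<and>
     0 < \<epsilon> \<and> \<epsilon> < 1 \<and> 0 < \<delta> \<and> \<delta> < 1 \<and>
     vnorm d rh = 1 \<and>
     min (vnorm d (\<lambda>i. rh i - rs i)) (vnorm d (\<lambda>i. rh i + rs i)) \<le> \<epsilon> \<and>
     real s \<ge> 1 * real d * (ln (real q) + ln (1 / \<delta>)) / \<epsilon>\<^sup>2"
  then have sym: "sym_mat d S" and pd: "posdef d S"
    and evmax: "is_eigenvalue d S lmax" and emax: "\<forall>l. is_eigenvalue d S l \<longrightarrow> l \<le> lmax"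
    and evmin: "is_eigenvalue d S lmin" and emin: "\<forall>l. is_eigenvalue d S l \<longrightarrow> lmin \<le> l"
    and g: "gaussian d S mu" and nrs: "vnorm d rs = 1" and q2: "2 \<le> q" and k1: "1 \<le> k"
    and kq1: "k \<le> q - 1" and kh: "2 * k \<noteq> q" and ep: "0 < \<epsilon>" and e1: "\<epsilon> < 1"
    and dp: "0 < \<delta>" and d1: "\<delta> < 1" and nrh: "vnorm d rh = 1"
    and mn: "min (vnorm d (\<lambda>i. rh i - rs i)) (vnorm d (\<lambda>i. rh i + rs i)) \<le> \<epsilon>"
    and sb: "real s \<ge> 1 * real d * (ln (real q) + ln (1 / \<delta>)) / \<epsilon>\<^sup>2"
    by auto
  have d0: "0 < d"
  proof (rule ccontr)
    assume "\<not> 0 < d" then have "d = 0" by simp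
    then show False using nrs unfolding vnorm_def by simp
  qed
  have lminp: "0 < lmin" by (rule eig_pos[OF pd evmin])
  have lml: "lmin \<le> lmax" using emin evmax by blast
  have lmaxp: "0 < lmax" using lminp lml by linarith
  have sd: "(1/4::real)^s \<le> \<delta>/2" and s0: "0 < s"
    using s_bound[of d q \<epsilon> \<delta> s] d0 q2 ep e1 dp d1 sb by auto
  have ss1: "sumsq d rs = 1" "sumsq d rh = 1" using nrs nrh vnorm_sq[of d rs] vnorm_sq[of d rh] by auto
  note qb = quadf_bounds[OF sym d0 emax emin]
  have qrs: "lmin \<le> quadf d S rs" using qb(1)[of rs] ss1 by simp
  have qrh: "lmin \<le> quadf d S rh" using qb(1)[of rh] ss1 by simp
  define E where "E = \<epsilon> * sqrt lmax"
  have Ep: "0 < E" unfolding E_def using ep lmaxp by simp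
  have E2: "E^2 = lmax * \<epsilon>^2" unfolding E_def using lmaxp by (simp add: power_mult_distrib)
  define bound where "bound = 16 * 24 * real q * \<epsilon> * sqrt (lmax / lmin)"
  have rat: "3 * E / sqrt lmin = 3 * \<epsilon> * sqrt (lmax / lmin)"
    unfolding E_def by (simp add: real_sqrt_divide)
  have sk: "0 \<le> \<epsilon> * sqrt (lmax / lmin)" using ep lmaxp lminp by simp
  have bnd: "3 * E / sqrt lmin \<le> bound"
  proof -
    have "1 * (\<epsilon> * sqrt (lmax / lmin)) \<le> (128 * real q) * (\<epsilon> * sqrt (lmax / lmin))"
      using q2 sk by (intro mult_right_mono) auto
    then show ?thesis unfolding rat bound_def by (simp add: mult_ac)
  qed
  have small: "2 * real q * (3 * E / sqrt lmin) \<le> 1/64" if "bound < 1"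
  proof -
    have "2 * real q * (3 * E / sqrt lmin) = bound / 64" unfolding rat bound_def by simp
    then show ?thesis using that by simp
  qed
  have q0: "0 < q" and kq: "k \<le> q" using q2 kq1 by auto
  have key: "vnorm d (\<lambda>i. rs i - gv i) \<le> \<epsilon> \<Longrightarrow> lmin \<le> quadf d S gv \<Longrightarrow>
     measure (PiM {..<s} (\<lambda>_. bag_oracle (\<lambda>x. pos (dotp d rs x)) mu q k))
     {M \<in> space (PiM {..<s} (\<lambda>_. bag_oracle (\<lambda>x. pos (dotp d rs x)) mu q k)).
       (bag_err_sample (\<lambda>x. pos (dotp d gv x)) q k s M \<le> bag_err_sample (\<lambda>x. pos (- dotp d gv x)) q k s M \<longrightarrow>
          measure mu {x \<in> space mu. pos (dotp d gv x) \<noteq> pos (dotp d rs x)} \<le> bound) \<and>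
       (bag_err_sample (\<lambda>x. pos (- dotp d gv x)) q k s M \<le> bag_err_sample (\<lambda>x. pos (dotp d gv x)) q k s M \<longrightarrow>
          measure mu {x \<in> space mu. pos (- dotp d gv x) \<noteq> pos (dotp d rs x)} \<le> bound)}
     \<ge> 1 - \<delta>/2" for gv
  proof -
    assume nv: "vnorm d (\<lambda>i. rs i - gv i) \<le> \<epsilon>" and qg: "lmin \<le> quadf d S gv"
    have "sumsq d (\<lambda>i. rs i - gv i) \<le> \<epsilon>^2"
    proof -
      have "0 \<le> vnorm d (\<lambda>i. rs i - gv i)" unfolding vnorm_def by (simp add: sum_nonneg)
      then have "(vnorm d (\<lambda>i. rs i - gv i))^2 \<le> \<epsilon>^2" using nv by (intro power_mono) auto
      then show ?thesis using vnorm_sq[of d "\<lambda>i. rs i - gv i"] by simp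
    qed
    then have "quadf d S (\<lambda>i. rs i - gv i) \<le> E^2"
      using qb(2)[of "\<lambda>i. rs i - gv i"] lmaxp unfolding E2
      by (meson mult_left_mono less_imp_le order_trans)
    then show ?thesis
      by (intro core[OF g pd lminp qrs qg Ep _ q0 kq kh bnd small s0 sd])
  qed
  show "let f = (\<lambda>x. pos (dotp d rs x));
          h = (\<lambda>x. pos (dotp d rh x));
          ht = (\<lambda>x. pos (- dotp d rh x));
          Bm = PiM {..<s} (\<lambda>_. bag_oracle f mu q k);
          bound = 16 * 24 * real q * \<epsilon> * sqrt (lmax / lmin);
          err = (\<lambda>g. measure mu {x \<in> space mu. g x \<noteq> f x})
      in measure Bm {M \<in> space Bm.
            (bag_err_sample h q k s M \<le> bag_err_sample ht q k s M \<longrightarrow> err h \<le> bound) \<and>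
            (bag_err_sample ht q k s M \<le> bag_err_sample h q k s M \<longrightarrow> err ht \<le> bound)}
         \<ge> 1 - \<delta> / 2"
  proof (cases "vnorm d (\<lambda>i. rh i - rs i) \<le> \<epsilon>")
    case True
    have "vnorm d (\<lambda>i. rs i - rh i) = vnorm d (\<lambda>i. rh i - rs i)"
      unfolding vnorm_def by (simp add: power2_commute)
    then have "vnorm d (\<lambda>i. rs i - rh i) \<le> \<epsilon>" using True by simp
    from key[OF this qrh] show ?thesis unfolding Let_def bound_def .
  next
    case False
    then have nv: "vnorm d (\<lambda>i. rh i + rs i) \<le> \<epsilon>" using mn by linarith
    have "vnorm d (\<lambda>i. rs i - - rh i) = vnorm d (\<lambda>i. rh i + rs i)"
      unfolding vnorm_def by (simp add: add.commute)
    then have nv2: "vnorm d (\<lambda>i. rs i - (\<lambda>i. - rh i) i) \<le> \<epsilon>" using nv by simp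
    have qn: "lmin \<le> quadf d S (\<lambda>i. - rh i)" using qrh by (simp add: quadf_uminus)
    from key[OF nv2 qn] show ?thesis unfolding Let_def bound_def dotp_minus minus_minus
      by (subst Collect_conj_swap)
  qed
qed (simp_all)


end
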